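(* Let $\lvert\psi\rangle\in(\mathbb{C}^d)^{\otimes n}$ be a unit vector with recursive Schmidt decomposition $\lvert\psi\rangle=\sum_{i=1}^{d^{n-1}}\sqrt{p_i}\,\lvert\phi_i\rangle$, where $p_i\ge0$, $\sum_ip_i=1$, and $\{\lvert\phi_i\rangle\}_{i=1}^{d^{n-1}}$ is a set of orthonormal product vectors in $(\mathbb{C}^d)^{\otimes n}$. Define $\rho:=\sum_{i=1}^{d^{n-1}}p_i\lvert\phi_i\rangle\langle\phi_i\rvert$. Then for every projector $\Pi$ acting on some subset $\mathcal{S}\subseteq\{1,\ldots,n\}$ of qudits with $|\mathcal{S}|=k$ (i.e. a projector on the qudits in $\mathcal{S}$ tensored with the identity on the rest), $\mathrm{Tr}(\Pi\rho)\ge\frac{1}{d^{k-1}}\mathrm{Tr}(\Pi\lvert\psi\rangle\langle\psi\rvert)$.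
   Context: Recursive Schmidt decomposition (RSD) of $\lvert\psi\rangle\in(\mathbb{C}^d)^{\otimes n}$ (with respect to the fixed qudit order $1,\ldots,n$): first write the Schmidt decomposition of $\lvert\psi\rangle$ across qudit $1$ versus qudits $2,\ldots,n$, $\lvert\psi\rangle=\sum_{i=1}^d\alpha_i\lvert w_i\rangle\lvert v_i\rangle$ (with $\alpha_i\ge 0$ and orthonormal $\{\lvert w_i\rangle\}$, $\{\lvert v_i\rangle\}$); then recursively replace each $\lvert v_i\rangle\in(\mathbb{C}^d)^{\otimes n-1}$ by its own Schmidt decomposition across its first qudit (qudit $2$) versus the remaining qudits, and so on, through qudit $n-1$. Expanding gives an expression $\lvert\psi\rangle=\sum_{i=1}^{d^{n-1}}\sqrt{p_i}\lvert\phi_i\rangle$ with each $\lvert\phi_i\rangle$ a tensor product of single-qudit vectors and $\sqrt{p_i}$ the product of the corresponding Schmidt coefficients. *)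

theory Defs
  imports Complex_Main "HOL-Library.FuncSet" "HOL-Library.Complex_Order"
begin

text \<open>Vectors in (C^d)^{tensor n} are functions on index lists (x_1,...,x_n), x_i < d.
  Qudits are numbered 0,...,n-1 (list positions). Single-qudit vectors are functions nat => complex
  on {..<d}.\<close>

definition basis :: "nat \<Rightarrow> nat \<Rightarrow> nat list set" where
  "basis d n = {xs. length xs = n \<and> (\<forall>x\<in>set xs. x < d)}"

definition inner_n :: "nat \<Rightarrow> nat \<Rightarrow> (nat list \<Rightarrow> complex) \<Rightarrow> (nat list \<Rightarrow> complex) \<Rightarrow> complex" where
  "inner_n d n u v = (\<Sum>xs\<in>basis d n. cnj (u xs) * v xs)"

definition inner1 :: "nat \<Rightarrow> (nat \<Rightarrow> complex) \<Rightarrow> (nat \<Rightarrow> complex) \<Rightarrow> complex" where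
  "inner1 d a b = (\<Sum>x<d. cnj (a x) * b x)"

definition orthonormal1 :: "nat \<Rightarrow> (nat \<Rightarrow> nat \<Rightarrow> complex) \<Rightarrow> bool" where
  "orthonormal1 d w = (\<forall>i<d. \<forall>j<d. inner1 d (w i) (w j) = (if i = j then 1 else 0))"

definition orthonormal_n :: "nat \<Rightarrow> nat \<Rightarrow> (nat \<Rightarrow> nat list \<Rightarrow> complex) \<Rightarrow> bool" where
  "orthonormal_n d n v = (\<forall>i<d. \<forall>j<d. inner_n d n (v i) (v j) = (if i = j then 1 else 0))"

definition tensor :: "(nat \<Rightarrow> complex) \<Rightarrow> (nat list \<Rightarrow> complex) \<Rightarrow> nat list \<Rightarrow> complex" where
  "tensor w v xs = (case xs of [] \<Rightarrow> 0 | x # ys \<Rightarrow> w x * v ys)"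

text \<open>rsd d n psi c phi: the terms indexed by i in basis d (n-1) with coefficient c i = sqrt p_i
  (product of Schmidt coefficients) and product vector phi i form a recursive Schmidt
  decomposition of psi in (C^d)^{tensor n}.\<close>
inductive rsd :: "nat \<Rightarrow> nat \<Rightarrow> (nat list \<Rightarrow> complex) \<Rightarrow> (nat list \<Rightarrow> real)
                   \<Rightarrow> (nat list \<Rightarrow> nat list \<Rightarrow> complex) \<Rightarrow> bool" for d where
  base: "c [] = 1 \<Longrightarrow> \<phi> [] = v \<Longrightarrow> rsd d (Suc 0) v c \<phi>"
| step: "\<lbrakk> n \<ge> 1;
          \<forall>j<d. \<alpha> j \<ge> 0;
          orthonormal1 d w;
          orthonormal_n d n v;
          \<forall>xs\<in>basis d (Suc n). \<psi> xs = (\<Sum>j<d. complex_of_real (\<alpha> j) * tensor (w j) (v j) xs);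
          \<forall>j<d. rsd d n (v j) (cs j) (\<phi>s j);
          \<forall>j<d. \<forall>is\<in>basis d (n - 1). c (j # is) = \<alpha> j * cs j is \<and> \<phi> (j # is) = tensor (w j) (\<phi>s j is) \<rbrakk>
         \<Longrightarrow> rsd d (Suc n) \<psi> c \<phi>"

text \<open>Operators on (C^d)^{tensor n} as kernels on basis indices.\<close>
definition ketbra :: "(nat list \<Rightarrow> complex) \<Rightarrow> (nat list \<Rightarrow> complex) \<Rightarrow> nat list \<Rightarrow> nat list \<Rightarrow> complex" where
  "ketbra u v = (\<lambda>x y. u x * cnj (v y))"

definition rsd_mixture :: "nat \<Rightarrow> nat \<Rightarrow> (nat list \<Rightarrow> real) \<Rightarrow> (nat list \<Rightarrow> nat list \<Rightarrow> complex)
                           \<Rightarrow> nat list \<Rightarrow> nat list \<Rightarrow> complex" where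
  "rsd_mixture d n c \<phi> = (\<lambda>x y. \<Sum>i\<in>basis d (n - 1). complex_of_real ((c i)\<^sup>2) * ketbra (\<phi> i) (\<phi> i) x y)"

definition trace_prod :: "nat \<Rightarrow> nat \<Rightarrow> (nat list \<Rightarrow> nat list \<Rightarrow> complex) \<Rightarrow> (nat list \<Rightarrow> nat list \<Rightarrow> complex) \<Rightarrow> complex" where
  "trace_prod d n A B = (\<Sum>x\<in>basis d n. \<Sum>y\<in>basis d n. A x y * B y x)"

text \<open>Local basis of the qudits in S: functions S -> {..<d}.\<close>
definition loc :: "nat set \<Rightarrow> nat list \<Rightarrow> nat \<Rightarrow> nat" where
  "loc S xs = restrict (\<lambda>i. xs ! i) S"

definition local_projector :: "nat \<Rightarrow> nat set \<Rightarrow> ((nat \<Rightarrow> nat) \<Rightarrow> (nat \<Rightarrow> nat) \<Rightarrow> complex) \<Rightarrow> bool" where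
  "local_projector d S Q =
     ((\<forall>a\<in>PiE S (\<lambda>_. {..<d}). \<forall>b\<in>PiE S (\<lambda>_. {..<d}). Q a b = cnj (Q b a)) \<and>
      (\<forall>a\<in>PiE S (\<lambda>_. {..<d}). \<forall>b\<in>PiE S (\<lambda>_. {..<d}).
          (\<Sum>e\<in>PiE S (\<lambda>_. {..<d}). Q a e * Q e b) = Q a b))"

definition embed_op :: "nat \<Rightarrow> nat set \<Rightarrow> ((nat \<Rightarrow> nat) \<Rightarrow> (nat \<Rightarrow> nat) \<Rightarrow> complex)
                        \<Rightarrow> nat list \<Rightarrow> nat list \<Rightarrow> complex" where
  "embed_op n S Q = (\<lambda>x y. Q (loc S x) (loc S y) * (if \<forall>i\<in>{..<n} - S. x ! i = y ! i then 1 else 0))"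

end

theory Submission
  imports Defs
begin


lemma finite_basis: "finite (basis d n)"
proof -
  have "basis d n \<subseteq> {xs. set xs \<subseteq> {..<d} \<and> length xs = n}"
    unfolding basis_def by auto
  moreover have "finite {xs. set xs \<subseteq> {..<d} \<and> length xs = n}"
    by (rule finite_lists_length_eq) auto
  ultimately show ?thesis by (rule finite_subset)
qed

lemma basis_0: "basis d 0 = {[]}"
  unfolding basis_def by auto

lemma basis_Suc: "basis d (Suc n) = (\<lambda>(a,ys). a#ys) ` ({..<d} \<times> basis d n)"
proof (rule set_eqI)
  fix xs show "xs \<in> basis d (Suc n) \<longleftrightarrow> xs \<in> (\<lambda>(a,ys). a#ys) ` ({..<d} \<times> basis d n)"
    unfolding basis_def by (cases xs) (auto simp: image_iff)
qed

lemma sum_basis_Suc: "(\<Sum>x\<in>basis d (Suc n). f x) = (\<Sum>a<d. \<Sum>ys\<in>basis d n. f (a#ys))"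
proof -
  have inj: "inj_on (\<lambda>(a,ys). a#ys) ({..<d} \<times> basis d n)"
    by (auto simp: inj_on_def)
  have "(\<Sum>x\<in>basis d (Suc n). f x) = (\<Sum>p\<in>{..<d} \<times> basis d n. f ((\<lambda>(a,ys). a#ys) p))"
    unfolding basis_Suc by (rule sum.reindex[OF inj, unfolded comp_def])
  also have "\<dots> = (\<Sum>a<d. \<Sum>ys\<in>basis d n. f (a#ys))"
    unfolding sum.cartesian_product by (intro sum.cong) auto
  finally show ?thesis .
qed

definition Bf :: "nat \<Rightarrow> nat \<Rightarrow> (nat list \<Rightarrow> nat list \<Rightarrow> complex) \<Rightarrow> (nat list \<Rightarrow> complex) \<Rightarrow> (nat list \<Rightarrow> complex) \<Rightarrow> complex" where
  "Bf d n K u v = (\<Sum>x\<in>basis d n. \<Sum>y\<in>basis d n. cnj (u x) * K x y * v y)"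

lemma Bf_cong: "(\<And>x. x \<in> basis d n \<Longrightarrow> u x = u' x) \<Longrightarrow> (\<And>x. x \<in> basis d n \<Longrightarrow> v x = v' x)
   \<Longrightarrow> Bf d n K u v = Bf d n K u' v'"
  unfolding Bf_def by (intro sum.cong refl) auto

lemma swap4:
  "(\<Sum>x\<in>X. \<Sum>y\<in>Y. \<Sum>j\<in>J. \<Sum>j'\<in>J'. h x y j j') = (\<Sum>j\<in>J. \<Sum>j'\<in>J'. \<Sum>x\<in>X. \<Sum>y\<in>Y. h x y j j')"
proof -
  have "(\<Sum>x\<in>X. \<Sum>y\<in>Y. \<Sum>j\<in>J. \<Sum>j'\<in>J'. h x y j j') = (\<Sum>x\<in>X. \<Sum>j\<in>J. \<Sum>y\<in>Y. \<Sum>j'\<in>J'. h x y j j')"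
    by (rule sum.cong[OF refl], rule sum.swap)
  also have "\<dots> = (\<Sum>x\<in>X. \<Sum>j\<in>J. \<Sum>j'\<in>J'. \<Sum>y\<in>Y. h x y j j')"
    by (rule sum.cong[OF refl], rule sum.cong[OF refl], rule sum.swap)
  also have "\<dots> = (\<Sum>j\<in>J. \<Sum>x\<in>X. \<Sum>j'\<in>J'. \<Sum>y\<in>Y. h x y j j')" by (rule sum.swap)
  also have "\<dots> = (\<Sum>j\<in>J. \<Sum>j'\<in>J'. \<Sum>x\<in>X. \<Sum>y\<in>Y. h x y j j')"
    by (rule sum.cong[OF refl], rule sum.swap)
  finally show ?thesis .
qed

lemma Bf_sum: "Bf d n K (\<lambda>x. \<Sum>j\<in>J. f j x) (\<lambda>x. \<Sum>j'\<in>J. g j' x)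
   = (\<Sum>j\<in>J. \<Sum>j'\<in>J. Bf d n K (f j) (g j'))"
proof -
  have "\<And>x y. cnj (\<Sum>j\<in>J. f j x) * K x y * (\<Sum>j'\<in>J. g j' y) = (\<Sum>j\<in>J. \<Sum>j'\<in>J. cnj (f j x) * K x y * g j' y)"
  proof -
    fix x y
    have "cnj (\<Sum>j\<in>J. f j x) * K x y * (\<Sum>j'\<in>J. g j' y) = (\<Sum>j\<in>J. cnj (f j x) * K x y) * (\<Sum>j'\<in>J. g j' y)"
      by (simp add: cnj_sum sum_distrib_right)
    also have "\<dots> = (\<Sum>j\<in>J. \<Sum>j'\<in>J. cnj (f j x) * K x y * g j' y)" by (rule sum_product)
    finally show "cnj (\<Sum>j\<in>J. f j x) * K x y * (\<Sum>j'\<in>J. g j' y) = (\<Sum>j\<in>J. \<Sum>j'\<in>J. cnj (f j x) * K x y * g j' y)" .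
  qed
  hence "Bf d n K (\<lambda>x. \<Sum>j\<in>J. f j x) (\<lambda>x. \<Sum>j'\<in>J. g j' x) = (\<Sum>x\<in>basis d n. \<Sum>y\<in>basis d n. \<Sum>j\<in>J. \<Sum>j'\<in>J. cnj (f j x) * K x y * g j' y)"
    unfolding Bf_def by (simp only:)
  also have "\<dots> = (\<Sum>j\<in>J. \<Sum>j'\<in>J. \<Sum>x\<in>basis d n. \<Sum>y\<in>basis d n. cnj (f j x) * K x y * g j' y)"
    by (rule swap4)
  finally show ?thesis unfolding Bf_def .
qed

lemma Bf_diff: "Bf d n K (\<lambda>x. u x - v x) (\<lambda>x. u x - v x) = Bf d n K u u - Bf d n K u v - Bf d n K v u + Bf d n K v v"
proof -
  have "\<And>x y. cnj (u x - v x) * K x y * (u y - v y) = cnj (u x) * K x y * u y - cnj (u x) * K x y * v y - cnj (v x) * K x y * u y + cnj (v x) * K x y * v y"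
    by (simp add: algebra_simps)
  thus ?thesis unfolding Bf_def by (simp only: sum.distrib sum_subtractf)
qed

lemma Bf_scale: "Bf d n K (\<lambda>x. a * u x) (\<lambda>x. b * v x) = cnj a * b * Bf d n K u v"
proof -
  have "\<And>x y. cnj (a * u x) * K x y * (b * v y) = cnj a * b * (cnj (u x) * K x y * v y)"
    by (simp add: mult_ac)
  thus ?thesis unfolding Bf_def by (simp only: sum_distrib_left)
qed

lemma Bf_tensor: "Bf d (Suc n) K (tensor w v) (tensor w' v') =
   (\<Sum>a<d. \<Sum>b<d. cnj (w a) * w' b * Bf d n (\<lambda>ys zs. K (a#ys) (b#zs)) v v')"
proof -
  have "Bf d (Suc n) K (tensor w v) (tensor w' v') =
     (\<Sum>a<d. \<Sum>ys\<in>basis d n. \<Sum>b<d. \<Sum>zs\<in>basis d n. cnj (w a) * w' b * (cnj (v ys) * K (a#ys) (b#zs) * v' zs))"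
    unfolding Bf_def sum_basis_Suc tensor_def
    by (intro sum.cong refl) (simp add: sum_distrib_left mult_ac)
  also have "\<dots> = (\<Sum>a<d. \<Sum>b<d. \<Sum>ys\<in>basis d n. \<Sum>zs\<in>basis d n. cnj (w a) * w' b * (cnj (v ys) * K (a#ys) (b#zs) * v' zs))"
    by (rule sum.cong[OF refl], rule sum.swap)
  also have "\<dots> = (\<Sum>a<d. \<Sum>b<d. cnj (w a) * w' b * Bf d n (\<lambda>ys zs. K (a#ys) (b#zs)) v v')"
    unfolding Bf_def by (simp only: sum_distrib_left)
  finally show ?thesis .
qed

definition shS :: "nat set \<Rightarrow> nat set" where "shS S = {i. Suc i \<in> S}"
definition sh0 :: "nat set \<Rightarrow> (nat \<Rightarrow> nat) \<Rightarrow> nat \<Rightarrow> nat" where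
  "sh0 S g = restrict (\<lambda>i. g (i - 1)) S"
definition ext0 :: "nat set \<Rightarrow> nat \<Rightarrow> (nat \<Rightarrow> nat) \<Rightarrow> nat \<Rightarrow> nat" where
  "ext0 S a g = restrict (\<lambda>i. if i = 0 then a else g (i - 1)) S"

lemma agree_Suc_notin: "0 \<notin> S \<Longrightarrow> (\<forall>i\<in>{..<Suc n} - S. (a#ys)!i = (b#zs)!i) \<longleftrightarrow> a = b \<and> (\<forall>i\<in>{..<n} - shS S. ys!i = zs!i)"
  unfolding shS_def
  apply (auto simp: less_Suc_eq_0_disj)
   apply (metis DiffI lessThan_iff nth_Cons_0 zero_less_Suc)
  by (metis DiffI Suc_less_eq lessThan_iff nth_Cons_Suc)

lemma agree_Suc_in: assumes "0 \<in> S" shows "(\<forall>i\<in>{..<Suc n} - S. (a#ys)!i = (b#zs)!i) \<longleftrightarrow> (\<forall>i\<in>{..<n} - shS S. ys!i = zs!i)"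
proof
  assume H: "\<forall>i\<in>{..<Suc n} - S. (a#ys)!i = (b#zs)!i"
  show "\<forall>i\<in>{..<n} - shS S. ys!i = zs!i"
  proof
    fix i assume "i \<in> {..<n} - shS S"
    hence "Suc i \<in> {..<Suc n} - S" unfolding shS_def by auto
    with H have "(a#ys)!Suc i = (b#zs)!Suc i" by blast
    thus "ys!i = zs!i" by simp
  qed
next
  assume H: "\<forall>i\<in>{..<n} - shS S. ys!i = zs!i"
  show "\<forall>i\<in>{..<Suc n} - S. (a#ys)!i = (b#zs)!i"
  proof
    fix i assume i: "i \<in> {..<Suc n} - S"
    with assms obtain j where j: "i = Suc j" by (cases i) auto
    with i have "j \<in> {..<n} - shS S" unfolding shS_def by auto
    with H j show "(a#ys)!i = (b#zs)!i" by simp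
  qed
qed

lemma loc_Suc_notin: "0 \<notin> S \<Longrightarrow> loc S (a#ys) = sh0 S (loc (shS S) ys)"
  unfolding loc_def sh0_def shS_def
  by (rule ext) (auto simp: restrict_def nth_Cons split: nat.splits)

lemma loc_Suc_in: "loc S (a#ys) = ext0 S a (loc (shS S) ys)"
  unfolding loc_def ext0_def shS_def
  by (rule ext) (auto simp: restrict_def nth_Cons split: nat.splits)

lemma embed_Suc_notin: "0 \<notin> S \<Longrightarrow> embed_op (Suc n) S Q (a#ys) (b#zs) =
   (if a = b then embed_op n (shS S) (\<lambda>g h. Q (sh0 S g) (sh0 S h)) ys zs else 0)"
  unfolding embed_op_def by (simp add: agree_Suc_notin loc_Suc_notin)

lemma embed_Suc_in: "0 \<in> S \<Longrightarrow> embed_op (Suc n) S Q (a#ys) (b#zs) =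
   embed_op n (shS S) (\<lambda>g h. Q (ext0 S a g) (ext0 S b h)) ys zs"
  unfolding embed_op_def by (simp add: agree_Suc_in loc_Suc_in)

lemma card_shS_notin: "0 \<notin> S \<Longrightarrow> card (shS S) = card S"
proof -
  assume "0 \<notin> S"
  hence "Suc ` shS S = S" unfolding shS_def by (auto simp: image_iff) (metis not0_implies_Suc)
  moreover have "inj Suc" by simp
  ultimately show ?thesis by (metis card_image inj_on_subset subset_UNIV)
qed

lemma card_shS_in: "0 \<in> S \<Longrightarrow> finite S \<Longrightarrow> card (shS S) = card S - 1"
proof -
  assume "0 \<in> S" "finite S"
  hence "Suc ` shS S = S - {0}" unfolding shS_def by (auto simp: image_iff) (metis not0_implies_Suc)
  moreover have "inj Suc" by simp
  ultimately have "card (shS S) = card (S - {0})" by (metis card_image inj_on_subset subset_UNIV)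
  thus ?thesis using \<open>0 \<in> S\<close> \<open>finite S\<close> by simp
qed

lemma shS_sub: "S \<subseteq> {..<Suc n} \<Longrightarrow> shS S \<subseteq> {..<n}"
  unfolding shS_def by auto

lemma Bf_Ksum: "finite A \<Longrightarrow> (\<Sum>a\<in>A. f a * Bf d n (K a) u v) = Bf d n (\<lambda>x y. \<Sum>a\<in>A. f a * K a x y) u v"
  unfolding Bf_def by (simp add: sum_distrib_left sum_distrib_right sum.swap[of _ A] mult_ac)

lemma Bf_if: "Bf d n (\<lambda>x y. if P then K x y else 0) u v = (if P then Bf d n K u v else 0)"
  unfolding Bf_def by simp

lemma Bf_caseA: "0 \<notin> S \<Longrightarrow> Bf d (Suc n) (embed_op (Suc n) S Q) (tensor w v) (tensor w' v') =
   inner1 d w w' * Bf d n (embed_op n (shS S) (\<lambda>g h. Q (sh0 S g) (sh0 S h))) v v'"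
  unfolding Bf_tensor inner1_def
  by (simp add: embed_Suc_notin Bf_if if_distrib sum_distrib_right cong: if_cong)

lemma Bf_caseB: "0 \<in> S \<Longrightarrow> Bf d (Suc n) (embed_op (Suc n) S Q) (tensor w v) (tensor w' v') =
   Bf d n (embed_op n (shS S) (\<lambda>g h. \<Sum>a<d. \<Sum>b<d. cnj (w a) * w' b * Q (ext0 S a g) (ext0 S b h))) v v'"
proof -
  assume "0 \<in> S"
  have "Bf d (Suc n) (embed_op (Suc n) S Q) (tensor w v) (tensor w' v') =
     (\<Sum>a<d. \<Sum>b<d. cnj (w a) * w' b * Bf d n (embed_op n (shS S) (\<lambda>g h. Q (ext0 S a g) (ext0 S b h))) v v')"
    unfolding Bf_tensor using \<open>0 \<in> S\<close> by (simp add: embed_Suc_in)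
  also have "\<dots> = (\<Sum>a<d. Bf d n (\<lambda>x y. \<Sum>b<d. cnj (w a) * w' b * embed_op n (shS S) (\<lambda>g h. Q (ext0 S a g) (ext0 S b h)) x y) v v')"
    by (simp add: Bf_Ksum)
  also have "\<dots> = Bf d n (\<lambda>x y. \<Sum>a<d. \<Sum>b<d. cnj (w a) * w' b * embed_op n (shS S) (\<lambda>g h. Q (ext0 S a g) (ext0 S b h)) x y) v v'"
    using Bf_Ksum[of "{..<d}" "\<lambda>_. 1"] by simp
  also have "\<dots> = Bf d n (embed_op n (shS S) (\<lambda>g h. \<Sum>a<d. \<Sum>b<d. cnj (w a) * w' b * Q (ext0 S a g) (ext0 S b h))) v v'"
  proof -
    have "(\<lambda>x y. \<Sum>a<d. \<Sum>b<d. cnj (w a) * w' b * embed_op n (shS S) (\<lambda>g h. Q (ext0 S a g) (ext0 S b h)) x y)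
       = embed_op n (shS S) (\<lambda>g h. \<Sum>a<d. \<Sum>b<d. cnj (w a) * w' b * Q (ext0 S a g) (ext0 S b h))"
      unfolding embed_op_def sum_distrib_right mult.assoc by simp
    thus ?thesis by simp
  qed
  finally show ?thesis .
qed

lemma embed_empty_Bf: "Bf d n (embed_op n {} Q) v v' = Q (\<lambda>_. undefined) (\<lambda>_. undefined) * inner_n d n v v'"
proof -
  have "\<And>x y. x \<in> basis d n \<Longrightarrow> y \<in> basis d n \<Longrightarrow> embed_op n {} Q x y = Q (\<lambda>_. undefined) (\<lambda>_. undefined) * (if x = y then 1 else 0)"
    unfolding embed_op_def loc_def basis_def by (auto simp: restrict_def intro: nth_equalityI)
  hence "Bf d n (embed_op n {} Q) v v' = (\<Sum>x\<in>basis d n. \<Sum>y\<in>basis d n. cnj (v x) * (Q (\<lambda>_. undefined) (\<lambda>_. undefined) * (if x = y then 1 else 0)) * v' y)"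
    unfolding Bf_def by (intro sum.cong refl) simp
  also have "\<dots> = (\<Sum>x\<in>basis d n. Q (\<lambda>_. undefined) (\<lambda>_. undefined) * (cnj (v x) * v' x))"
  proof (intro sum.cong refl)
    fix x assume x: "x \<in> basis d n"
    have "(\<Sum>y\<in>basis d n. cnj (v x) * (Q (\<lambda>_. undefined) (\<lambda>_. undefined) * (if x = y then 1 else 0)) * v' y)
       = (\<Sum>y\<in>basis d n. if x = y then Q (\<lambda>_. undefined) (\<lambda>_. undefined) * (cnj (v x) * v' y) else 0)"
      by (intro sum.cong refl) simp
    also have "\<dots> = Q (\<lambda>_. undefined) (\<lambda>_. undefined) * (cnj (v x) * v' x)"
      using x by (simp add: sum.delta finite_basis)
    finally show "(\<Sum>y\<in>basis d n. cnj (v x) * (Q (\<lambda>_. undefined) (\<lambda>_. undefined) * (if x = y then 1 else 0)) * v' y)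
       = Q (\<lambda>_. undefined) (\<lambda>_. undefined) * (cnj (v x) * v' x)" .
  qed
  also have "\<dots> = Q (\<lambda>_. undefined) (\<lambda>_. undefined) * inner_n d n v v'"
    unfolding inner_n_def by (simp add: sum_distrib_left)
  finally show ?thesis .
qed



lemma pinch:
  fixes M :: "nat \<Rightarrow> nat \<Rightarrow> complex"
  assumes "\<And>j j'. j < m \<Longrightarrow> j' < m \<Longrightarrow> 0 \<le> M j j + M j' j' - M j j' - M j' j"
  shows "(\<Sum>j<m. \<Sum>j'<m. M j j') \<le> of_nat m * (\<Sum>j<m. M j j)"
proof -
  define T where "T = (\<Sum>j<m. M j j)"
  define X where "X = (\<Sum>j<m. \<Sum>j'<m. M j j')"
  have "0 \<le> (\<Sum>j<m. \<Sum>j'<m. M j j + M j' j' - M j j' - M j' j)"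
    by (intro sum_nonneg) (rule assms, simp_all)
  also have "\<dots> = (\<Sum>j<m. \<Sum>j'<m. M j j) + (\<Sum>j<m. \<Sum>j'<m. M j' j') - X - (\<Sum>j<m. \<Sum>j'<m. M j' j)"
    unfolding X_def by (simp add: sum.distrib sum_subtractf)
  also have "(\<Sum>j<m. \<Sum>j'<m. M j' j) = X"
    unfolding X_def by (rule sum.swap)
  also have "(\<Sum>j<m. \<Sum>j'<m. M j j) = of_nat m * T"
    unfolding T_def by (simp add: sum_distrib_left mult.commute)
  also have "(\<Sum>j<m. \<Sum>j'<m. M j' j') = of_nat m * T"
    unfolding T_def by simp
  finally have "0 \<le> 2 * (of_nat m * T - X)" by (simp add: algebra_simps)
  hence "X \<le> of_nat m * T" by (simp add: less_eq_complex_def)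
  thus ?thesis unfolding X_def T_def .
qed

lemma fiber_nonneg:
  fixes A :: "'a \<Rightarrow> complex"
  assumes "finite X"
  shows "0 \<le> (\<Sum>x\<in>X. \<Sum>y\<in>X. cnj (A x) * (if r x = r y then 1 else 0) * A y)"
proof -
  define F where "F z = (\<Sum>y\<in>{y\<in>X. r y = z}. A y)" for z
  have "(\<Sum>x\<in>X. \<Sum>y\<in>X. cnj (A x) * (if r x = r y then 1 else 0) * A y) = (\<Sum>x\<in>X. cnj (A x) * F (r x))"
  proof (intro sum.cong refl)
    fix x assume "x \<in> X"
    have "(\<Sum>y\<in>X. cnj (A x) * (if r x = r y then 1 else 0) * A y) = cnj (A x) * (\<Sum>y\<in>X. if r y = r x then A y else 0)"
      by (simp add: sum_distrib_left) (intro sum.cong refl, auto)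
    also have "\<dots> = cnj (A x) * F (r x)"
      unfolding F_def by (simp add: sum.inter_filter[OF assms])
    finally show "(\<Sum>y\<in>X. cnj (A x) * (if r x = r y then 1 else 0) * A y) = cnj (A x) * F (r x)" .
  qed
  also have "\<dots> = (\<Sum>z\<in>r`X. \<Sum>x\<in>{x\<in>X. r x = z}. cnj (A x) * F (r x))"
    by (rule sum.image_gen[OF assms])
  also have "\<dots> = (\<Sum>z\<in>r`X. cnj (F z) * F z)"
  proof (intro sum.cong refl)
    fix z
    have "(\<Sum>x\<in>{x\<in>X. r x = z}. cnj (A x) * F (r x)) = (\<Sum>x\<in>{x\<in>X. r x = z}. cnj (A x) * F z)"
      by (intro sum.cong refl) auto
    also have "\<dots> = cnj (F z) * F z"
      unfolding F_def[of z] by (simp add: sum_distrib_right cnj_sum)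
    finally show "(\<Sum>x\<in>{x\<in>X. r x = z}. cnj (A x) * F (r x)) = cnj (F z) * F z" .
  qed
  also have "0 \<le> \<dots>"
  proof (intro sum_nonneg)
    fix z
    show "0 \<le> cnj (F z) * F z" by (simp add: less_eq_complex_def)
  qed
  finally show ?thesis .
qed

lemma loc_in_PiE: "S \<subseteq> {..<n} \<Longrightarrow> x \<in> basis d n \<Longrightarrow> loc S x \<in> PiE S (\<lambda>_. {..<d})"
  unfolding loc_def basis_def by (auto simp: restrict_PiE_iff)

lemma psd_embed:
  assumes lp: "local_projector d S Q" and Sn: "S \<subseteq> {..<n}"
  shows "0 \<le> Bf d n (embed_op n S Q) u u"
proof -
  define P where "P = PiE S (\<lambda>_. {..<d})"
  have "finite S" using Sn finite_subset by blast
  hence finP: "finite P" unfolding P_def by (simp add: finite_PiE)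
  define r where "r x = restrict (\<lambda>i. x!i) ({..<n} - S)" for x :: "nat list"
  have agree: "(\<forall>i\<in>{..<n} - S. x!i = y!i) \<longleftrightarrow> r x = r y" for x y
  proof
    assume "\<forall>i\<in>{..<n} - S. x!i = y!i" thus "r x = r y" unfolding r_def by (intro restrict_ext) simp
  next
    assume "r x = r y"
    thus "\<forall>i\<in>{..<n} - S. x!i = y!i" unfolding r_def by (metis restrict_apply')
  qed
  have proj: "\<And>a b. a\<in>P \<Longrightarrow> b\<in>P \<Longrightarrow> (\<Sum>e\<in>P. Q a e * Q e b) = Q a b"
    using lp unfolding local_projector_def P_def by blast
  have herm: "\<And>a b. a\<in>P \<Longrightarrow> b\<in>P \<Longrightarrow> Q a b = cnj (Q b a)"
    using lp unfolding local_projector_def P_def by blast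
  have Qs: "Q (loc S x) (loc S y) = (\<Sum>e\<in>P. cnj (Q e (loc S x)) * Q e (loc S y))"
    if "x \<in> basis d n" "y \<in> basis d n" for x y
  proof -
    have lx: "loc S x \<in> P" unfolding P_def using that Sn by (intro loc_in_PiE)
    have ly: "loc S y \<in> P" unfolding P_def using that Sn by (intro loc_in_PiE)
    have "Q (loc S x) (loc S y) = (\<Sum>e\<in>P. Q (loc S x) e * Q e (loc S y))"
      using proj[OF lx ly] by simp
    also have "\<dots> = (\<Sum>e\<in>P. cnj (Q e (loc S x)) * Q e (loc S y))"
      by (intro sum.cong refl) (simp add: herm[OF lx])
    finally show ?thesis .
  qed
  have trm: "cnj (u x) * embed_op n S Q x y * u y = (\<Sum>e\<in>P.
      cnj (Q e (loc S x) * u x) * (if r x = r y then 1 else 0) * (Q e (loc S y) * u y))"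
    if "x \<in> basis d n" "y \<in> basis d n" for x y
  proof -
    have "cnj (u x) * embed_op n S Q x y * u y = Q (loc S x) (loc S y) * (cnj (u x) * (if r x = r y then 1 else 0) * u y)"
      unfolding embed_op_def agree by (simp only: mult_ac)
    also have "\<dots> = (\<Sum>e\<in>P. cnj (Q e (loc S x)) * Q e (loc S y)) * (cnj (u x) * (if r x = r y then 1 else 0) * u y)"
      using Qs[OF that] by simp
    also have "\<dots> = (\<Sum>e\<in>P. cnj (Q e (loc S x)) * Q e (loc S y) * (cnj (u x) * (if r x = r y then 1 else 0) * u y))"
      by (rule sum_distrib_right)
    also have "\<dots> = (\<Sum>e\<in>P. cnj (Q e (loc S x) * u x) * (if r x = r y then 1 else 0) * (Q e (loc S y) * u y))"
      by (intro sum.cong refl) (simp only: complex_cnj_mult mult_ac)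
    finally show ?thesis .
  qed
  have "Bf d n (embed_op n S Q) u u = (\<Sum>x\<in>basis d n. \<Sum>y\<in>basis d n. \<Sum>e\<in>P.
      cnj (Q e (loc S x) * u x) * (if r x = r y then 1 else 0) * (Q e (loc S y) * u y))"
    unfolding Bf_def by (intro sum.cong refl trm)
  also have "\<dots> = (\<Sum>e\<in>P. \<Sum>x\<in>basis d n. \<Sum>y\<in>basis d n.
      cnj (Q e (loc S x) * u x) * (if r x = r y then 1 else 0) * (Q e (loc S y) * u y))"
    (is "_ = (\<Sum>e\<in>P. \<Sum>x\<in>basis d n. \<Sum>y\<in>basis d n. ?f e x y)")
  proof -
    have "\<And>x. (\<Sum>y\<in>basis d n. \<Sum>e\<in>P. ?f e x y) = (\<Sum>e\<in>P. \<Sum>y\<in>basis d n. ?f e x y)"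
      by (rule sum.swap)
    hence "(\<Sum>x\<in>basis d n. \<Sum>y\<in>basis d n. \<Sum>e\<in>P. ?f e x y) = (\<Sum>x\<in>basis d n. \<Sum>e\<in>P. \<Sum>y\<in>basis d n. ?f e x y)"
      by simp
    also have "\<dots> = (\<Sum>e\<in>P. \<Sum>x\<in>basis d n. \<Sum>y\<in>basis d n. ?f e x y)"
      by (rule sum.swap)
    finally show ?thesis .
  qed
  also have "0 \<le> \<dots>"
    by (intro sum_nonneg fiber_nonneg finite_basis)
  finally show ?thesis .
qed



definition mixv :: "nat \<Rightarrow> nat \<Rightarrow> (nat list \<Rightarrow> real) \<Rightarrow> (nat list \<Rightarrow> nat list \<Rightarrow> complex) \<Rightarrow> (nat list \<Rightarrow> nat list \<Rightarrow> complex) \<Rightarrow> complex" where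
  "mixv d n c \<phi> K = (\<Sum>i\<in>basis d (n - 1). complex_of_real ((c i)\<^sup>2) * Bf d n K (\<phi> i) (\<phi> i))"

lemma of_real_nonneg_c: "0 \<le> r \<Longrightarrow> 0 \<le> complex_of_real r"
  by (simp add: less_eq_complex_def)

lemma combine:
  fixes B X :: "nat \<Rightarrow> complex" and a :: "nat \<Rightarrow> real" and D :: complex
  assumes "\<And>j. j < d \<Longrightarrow> B j \<le> D * X j"
  shows "(\<Sum>j<d. complex_of_real ((a j)\<^sup>2) * B j) \<le> D * (\<Sum>j<d. complex_of_real ((a j)\<^sup>2) * X j)"
proof -
  have "(\<Sum>j<d. complex_of_real ((a j)\<^sup>2) * B j) \<le> (\<Sum>j<d. complex_of_real ((a j)\<^sup>2) * (D * X j))"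
    by (intro sum_mono mult_left_mono assms of_real_nonneg_c) auto
  also have "\<dots> = D * (\<Sum>j<d. complex_of_real ((a j)\<^sup>2) * X j)"
    by (simp add: sum_distrib_left mult_ac)
  finally show ?thesis .
qed

lemma Bf_empty_d: "Bf 0 (Suc n) K u v = 0"
  unfolding Bf_def sum_basis_Suc by simp

lemma one_le_pow: "0 < d \<Longrightarrow> (1::complex) \<le> of_nat d ^ m"
proof -
  assume "0 < d"
  hence "1 \<le> real d" by simp
  hence "1 \<le> real d ^ m" by (rule one_le_power)
  thus ?thesis by (simp add: less_eq_complex_def)
qed

lemma pow_nonneg_c: "(0::complex) \<le> of_nat d ^ m"
  by (simp add: less_eq_complex_def)

lemma main:
  assumes "rsd d n \<psi> c \<phi>"
  shows "\<forall>S Q. S \<subseteq> {..<n} \<longrightarrow> (\<forall>u. 0 \<le> Bf d n (embed_op n S Q) u u) \<longrightarrow>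
     Bf d n (embed_op n S Q) \<psi> \<psi> \<le> of_nat d ^ (card S - 1) * mixv d n c \<phi> (embed_op n S Q)"
  using assms
proof (induction rule: rsd.induct)
  case (base c \<phi> v)
  show ?case
  proof (intro allI impI)
    fix S Q
    assume psd: "\<forall>u. 0 \<le> Bf d (Suc 0) (embed_op (Suc 0) S Q) u u"
    have mx: "mixv d (Suc 0) c \<phi> (embed_op (Suc 0) S Q) = Bf d (Suc 0) (embed_op (Suc 0) S Q) v v"
      using base by (simp add: mixv_def basis_0)
    show "Bf d (Suc 0) (embed_op (Suc 0) S Q) v v \<le> of_nat d ^ (card S - 1) * mixv d (Suc 0) c \<phi> (embed_op (Suc 0) S Q)"
    proof (cases "d = 0")
      case True thus ?thesis unfolding mx by (simp add: Bf_empty_d)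
    next
      case False
      hence "1 * Bf d (Suc 0) (embed_op (Suc 0) S Q) v v \<le> of_nat d ^ (card S - 1) * Bf d (Suc 0) (embed_op (Suc 0) S Q) v v"
        using psd by (intro mult_right_mono one_le_pow) auto
      thus ?thesis unfolding mx by simp
    qed
  qed
next
  case (step n \<alpha> w v \<psi> cs \<phi>s c \<phi>)
  have n1: "1 \<le> n" using step by blast
  have alpha: "\<forall>j<d. 0 \<le> \<alpha> j" using step by blast
  have on1: "orthonormal1 d w" using step by blast
  have onn: "orthonormal_n d n v" using step by blast
  have psi: "\<forall>xs\<in>basis d (Suc n). \<psi> xs = (\<Sum>j<d. complex_of_real (\<alpha> j) * tensor (w j) (v j) xs)" using step by blast
  have cphi: "\<forall>j<d. \<forall>ks\<in>basis d (n - 1). c (j # ks) = \<alpha> j * cs j ks \<and> \<phi> (j # ks) = tensor (w j) (\<phi>s j ks)"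
    using step by blast
  have IH: "\<forall>j<d. \<forall>S Q. S \<subseteq> {..<n} \<longrightarrow> (\<forall>u. 0 \<le> Bf d n (embed_op n S Q) u u) \<longrightarrow>
               Bf d n (embed_op n S Q) (v j) (v j) \<le> of_nat d ^ (card S - 1) * mixv d n (cs j) (\<phi>s j) (embed_op n S Q)"
    using step by blast
  have bn: "basis d (Suc n - 1) = basis d (Suc (n - 1))" using n1 by simp
  show ?case
  proof (intro allI impI)
    fix S Q
    assume Sn: "S \<subseteq> {..<Suc n}" and psdK0: "\<forall>u. 0 \<le> Bf d (Suc n) (embed_op (Suc n) S Q) u u"
    define K where "K = embed_op (Suc n) S Q"
    define t where "t j = tensor (w j) (v j)" for j
    have psdK: "\<And>u. 0 \<le> Bf d (Suc n) K u u" using psdK0 unfolding K_def by blast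
    have H2: "mixv d (Suc n) c \<phi> K = (\<Sum>j<d. complex_of_real ((\<alpha> j)\<^sup>2) * (\<Sum>ks\<in>basis d (n - 1).
        complex_of_real ((cs j ks)\<^sup>2) * Bf d (Suc n) K (tensor (w j) (\<phi>s j ks)) (tensor (w j) (\<phi>s j ks))))"
    proof -
      have "mixv d (Suc n) c \<phi> K = (\<Sum>j<d. \<Sum>ks\<in>basis d (n - 1). complex_of_real ((c (j#ks))\<^sup>2) * Bf d (Suc n) K (\<phi> (j#ks)) (\<phi> (j#ks)))"
        unfolding mixv_def bn sum_basis_Suc ..
      also have "\<dots> = (\<Sum>j<d. \<Sum>ks\<in>basis d (n - 1). complex_of_real ((\<alpha> j)\<^sup>2) * (complex_of_real ((cs j ks)\<^sup>2) * Bf d (Suc n) K (tensor (w j) (\<phi>s j ks)) (tensor (w j) (\<phi>s j ks))))"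
      proof (intro sum.cong refl)
        fix j ks assume j: "j \<in> {..<d}" and ks: "ks \<in> basis d (n - 1)"
        hence e1: "c (j#ks) = \<alpha> j * cs j ks" and e2: "\<phi> (j#ks) = tensor (w j) (\<phi>s j ks)" using cphi by auto
        show "complex_of_real ((c (j#ks))\<^sup>2) * Bf d (Suc n) K (\<phi> (j#ks)) (\<phi> (j#ks)) =
           complex_of_real ((\<alpha> j)\<^sup>2) * (complex_of_real ((cs j ks)\<^sup>2) * Bf d (Suc n) K (tensor (w j) (\<phi>s j ks)) (tensor (w j) (\<phi>s j ks)))"
          unfolding e1 e2 by (simp add: power_mult_distrib)
      qed
      also have "\<dots> = (\<Sum>j<d. complex_of_real ((\<alpha> j)\<^sup>2) * (\<Sum>ks\<in>basis d (n - 1).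
        complex_of_real ((cs j ks)\<^sup>2) * Bf d (Suc n) K (tensor (w j) (\<phi>s j ks)) (tensor (w j) (\<phi>s j ks))))"
        by (simp add: sum_distrib_left)
      finally show ?thesis .
    qed
    have "Bf d (Suc n) K \<psi> \<psi> \<le> of_nat d ^ (card S - 1) * mixv d (Suc n) c \<phi> K"
    proof (cases "d = 0")
      case True
      have "basis d (Suc (n - 1)) = {}" unfolding True basis_Suc by simp
      hence "mixv d (Suc n) c \<phi> K = 0" unfolding mixv_def bn by simp
      thus ?thesis using True by (simp add: Bf_empty_d)
    next
      case False
      hence d0: "0 < d" by simp
      have H1: "Bf d (Suc n) K \<psi> \<psi> = (\<Sum>j<d. \<Sum>j'<d. complex_of_real (\<alpha> j) * complex_of_real (\<alpha> j') * Bf d (Suc n) K (t j) (t j'))"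
      proof -
        have "Bf d (Suc n) K \<psi> \<psi> = Bf d (Suc n) K (\<lambda>x. \<Sum>j<d. complex_of_real (\<alpha> j) * t j x) (\<lambda>x. \<Sum>j'<d. complex_of_real (\<alpha> j') * t j' x)"
          using psi unfolding t_def by (intro Bf_cong) auto
        also have "\<dots> = (\<Sum>j<d. \<Sum>j'<d. Bf d (Suc n) K (\<lambda>x. complex_of_real (\<alpha> j) * t j x) (\<lambda>x. complex_of_real (\<alpha> j') * t j' x))"
          by (rule Bf_sum)
        also have "\<dots> = (\<Sum>j<d. \<Sum>j'<d. complex_of_real (\<alpha> j) * complex_of_real (\<alpha> j') * Bf d (Suc n) K (t j) (t j'))"
          by (simp add: Bf_scale)
        finally show ?thesis .
      qed
      have w0: "inner1 d (w j) (w j') = (if j = j' then 1 else 0)" if "j < d" "j' < d" for j j'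
        using on1 that unfolding orthonormal1_def by blast
      have v0: "inner_n d n (v j) (v j') = (if j = j' then 1 else 0)" if "j < d" "j' < d" for j j'
        using onn that unfolding orthonormal_n_def by blast
      show ?thesis
      proof (cases "0 \<in> S")
        case False
        define S' where "S' = shS S"
        define Q' where "Q' = (\<lambda>g h. Q (sh0 S g) (sh0 S h))"
        define K' where "K' = embed_op n S' Q'"
        have cA: "\<And>w w' x y. Bf d (Suc n) K (tensor w x) (tensor w' y) = inner1 d w w' * Bf d n K' x y"
          unfolding K_def K'_def S'_def Q'_def using Bf_caseA[OF False] by blast
        have psd': "\<forall>u. 0 \<le> Bf d n K' u u"
        proof
          fix u
          have "Bf d n K' u u = Bf d (Suc n) K (tensor (w 0) u) (tensor (w 0) u)"
            using cA w0[OF d0 d0] by simp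
          thus "0 \<le> Bf d n K' u u" using psdK by simp
        qed
        have S'n: "S' \<subseteq> {..<n}" unfolding S'_def using Sn by (rule shS_sub)
        have cardS': "card S' = card S" unfolding S'_def using False by (rule card_shS_notin)
        have IHj: "Bf d n K' (v j) (v j) \<le> of_nat d ^ (card S - 1) * mixv d n (cs j) (\<phi>s j) K'" if "j < d" for j
          using IH[rule_format, OF that S'n psd'[unfolded K'_def, rule_format]] cardS' unfolding K'_def by simp
        have "Bf d (Suc n) K \<psi> \<psi> = (\<Sum>j<d. complex_of_real ((\<alpha> j)\<^sup>2) * Bf d n K' (v j) (v j))"
          unfolding H1
        proof (intro sum.cong refl)
          fix j assume j: "j \<in> {..<d}"
          have "(\<Sum>j'<d. complex_of_real (\<alpha> j) * complex_of_real (\<alpha> j') * Bf d (Suc n) K (t j) (t j'))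
              = (\<Sum>j'<d. if j = j' then complex_of_real ((\<alpha> j)\<^sup>2) * Bf d n K' (v j) (v j) else 0)"
            using j by (intro sum.cong refl) (auto simp: t_def cA w0 power2_eq_square)
          also have "\<dots> = complex_of_real ((\<alpha> j)\<^sup>2) * Bf d n K' (v j) (v j)"
            using j by simp
          finally show "(\<Sum>j'<d. complex_of_real (\<alpha> j) * complex_of_real (\<alpha> j') * Bf d (Suc n) K (t j) (t j'))
              = complex_of_real ((\<alpha> j)\<^sup>2) * Bf d n K' (v j) (v j)" .
        qed
        also have "\<dots> \<le> of_nat d ^ (card S - 1) * (\<Sum>j<d. complex_of_real ((\<alpha> j)\<^sup>2) * mixv d n (cs j) (\<phi>s j) K')"
          by (rule combine) (rule IHj)
        also have "(\<Sum>j<d. complex_of_real ((\<alpha> j)\<^sup>2) * mixv d n (cs j) (\<phi>s j) K') = mixv d (Suc n) c \<phi> K"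
          unfolding H2
        proof (intro sum.cong refl arg_cong2[where f="(*)"])
          fix j assume j: "j \<in> {..<d}"
          show "mixv d n (cs j) (\<phi>s j) K' = (\<Sum>ks\<in>basis d (n - 1). complex_of_real ((cs j ks)\<^sup>2) * Bf d (Suc n) K (tensor (w j) (\<phi>s j ks)) (tensor (w j) (\<phi>s j ks)))"
            unfolding mixv_def using j by (simp add: cA w0)
        qed
        finally show ?thesis .
      next
        case True
        define S' where "S' = shS S"
        define Qw where "Qw w w' = (\<lambda>g h. \<Sum>a<d. \<Sum>b<d. cnj (w a) * w' b * Q (ext0 S a g) (ext0 S b h))"
          for w w' :: "nat \<Rightarrow> complex"
        have cB: "\<And>w w' x y. Bf d (Suc n) K (tensor w x) (tensor w' y) = Bf d n (embed_op n S' (Qw w w')) x y"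
          unfolding K_def S'_def Qw_def using Bf_caseB[OF True] by blast
        have finS: "finite S" using Sn finite_subset by blast
        have cardS': "card S' = card S - 1" unfolding S'_def using True finS by (rule card_shS_in)
        have S'n: "S' \<subseteq> {..<n}" unfolding S'_def using Sn by (rule shS_sub)
        have psdw: "\<forall>u. 0 \<le> Bf d n (embed_op n S' (Qw ww ww)) u u" for ww
          using cB psdK by metis
        let ?Kj = "\<lambda>j. embed_op n S' (Qw (w j) (w j))"
        have IHj: "Bf d n (?Kj j) (v j) (v j) \<le> of_nat d ^ (card S' - 1) * mixv d n (cs j) (\<phi>s j) (?Kj j)" if "j < d" for j
          using IH[rule_format, OF that S'n psdw[rule_format]] by simp
        have mixj: "mixv d n (cs j) (\<phi>s j) (?Kj j) = (\<Sum>ks\<in>basis d (n - 1). complex_of_real ((cs j ks)\<^sup>2) * Bf d (Suc n) K (tensor (w j) (\<phi>s j ks)) (tensor (w j) (\<phi>s j ks)))" for j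
          unfolding mixv_def by (simp add: cB)
        have Mdiag: "complex_of_real (\<alpha> j) * complex_of_real (\<alpha> j) * Bf d (Suc n) K (t j) (t j) = complex_of_real ((\<alpha> j)\<^sup>2) * Bf d n (?Kj j) (v j) (v j)" for j
          by (simp add: t_def cB power2_eq_square)
        define D1 where "D1 = (if S' = {} then 0 else 1 :: nat)"
        have key: "Bf d (Suc n) K \<psi> \<psi> \<le> of_nat d ^ D1 * (\<Sum>j<d. complex_of_real (\<alpha> j) * complex_of_real (\<alpha> j) * Bf d (Suc n) K (t j) (t j))"
        proof (cases "S' = {}")
          case True
          have "Bf d (Suc n) K \<psi> \<psi> = (\<Sum>j<d. complex_of_real (\<alpha> j) * complex_of_real (\<alpha> j) * Bf d (Suc n) K (t j) (t j))"
            unfolding H1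
          proof (intro sum.cong refl)
            fix j assume j: "j \<in> {..<d}"
            have "(\<Sum>j'<d. complex_of_real (\<alpha> j) * complex_of_real (\<alpha> j') * Bf d (Suc n) K (t j) (t j'))
                = (\<Sum>j'<d. if j = j' then complex_of_real (\<alpha> j) * complex_of_real (\<alpha> j) * Bf d (Suc n) K (t j) (t j) else 0)"
              using j by (intro sum.cong refl) (auto simp: t_def cB True embed_empty_Bf v0)
            also have "\<dots> = complex_of_real (\<alpha> j) * complex_of_real (\<alpha> j) * Bf d (Suc n) K (t j) (t j)"
              using j by simp
            finally show "(\<Sum>j'<d. complex_of_real (\<alpha> j) * complex_of_real (\<alpha> j') * Bf d (Suc n) K (t j) (t j'))
                = complex_of_real (\<alpha> j) * complex_of_real (\<alpha> j) * Bf d (Suc n) K (t j) (t j)" .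
          qed
          thus ?thesis unfolding D1_def using True by simp
        next
          case False
          have "Bf d (Suc n) K \<psi> \<psi> \<le> of_nat d * (\<Sum>j<d. complex_of_real (\<alpha> j) * complex_of_real (\<alpha> j) * Bf d (Suc n) K (t j) (t j))"
            unfolding H1
          proof (rule pinch)
            fix j j'
            let ?M = "\<lambda>j j'. complex_of_real (\<alpha> j) * complex_of_real (\<alpha> j') * Bf d (Suc n) K (t j) (t j')"
            have "?M j j + ?M j' j' - ?M j j' - ?M j' j =
                Bf d (Suc n) K (\<lambda>x. complex_of_real (\<alpha> j) * t j x - complex_of_real (\<alpha> j') * t j' x)
                               (\<lambda>x. complex_of_real (\<alpha> j) * t j x - complex_of_real (\<alpha> j') * t j' x)"
              by (simp only: Bf_diff Bf_scale complex_cnj_complex_of_real) (simp add: algebra_simps)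
            thus "0 \<le> ?M j j + ?M j' j' - ?M j j' - ?M j' j" using psdK by simp
          qed
          thus ?thesis unfolding D1_def using False by simp
        qed
        also have "(\<Sum>j<d. complex_of_real (\<alpha> j) * complex_of_real (\<alpha> j) * Bf d (Suc n) K (t j) (t j))
            = (\<Sum>j<d. complex_of_real ((\<alpha> j)\<^sup>2) * Bf d n (?Kj j) (v j) (v j))"
          by (simp only: Mdiag)
        also have "of_nat d ^ D1 * \<dots> \<le> of_nat d ^ D1 * (of_nat d ^ (card S' - 1) * (\<Sum>j<d. complex_of_real ((\<alpha> j)\<^sup>2) * mixv d n (cs j) (\<phi>s j) (?Kj j)))"
          by (intro mult_left_mono pow_nonneg_c combine IHj)
        also have "\<dots> = of_nat d ^ (card S - 1) * mixv d (Suc n) c \<phi> K"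
        proof -
          have ex: "D1 + (card S' - 1) = card S - 1"
          proof (cases "S' = {}")
            case True thus ?thesis unfolding D1_def using cardS' by simp
          next
            case False
            have "finite S'" using S'n finite_subset by blast
            hence "card S' \<ge> 1" using False by (simp add: Suc_leI card_gt_0_iff)
            thus ?thesis unfolding D1_def using False cardS' by simp
          qed
          have "(\<Sum>j<d. complex_of_real ((\<alpha> j)\<^sup>2) * mixv d n (cs j) (\<phi>s j) (?Kj j)) = mixv d (Suc n) c \<phi> K"
            unfolding H2 mixj ..
          thus ?thesis using ex by (simp add: power_add[symmetric] mult.assoc)
        qed
        finally show ?thesis .
      qed
    qed
    thus "Bf d (Suc n) (embed_op (Suc n) S Q) \<psi> \<psi> \<le> of_nat d ^ (card S - 1) * mixv d (Suc n) c \<phi> (embed_op (Suc n) S Q)"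
      unfolding K_def .
  qed
qed


lemma trace_mix: "trace_prod d n E (rsd_mixture d n c \<phi>) = mixv d n c \<phi> E"
proof -
  have "trace_prod d n E (rsd_mixture d n c \<phi>) = (\<Sum>x\<in>basis d n. \<Sum>y\<in>basis d n. \<Sum>i\<in>basis d (n - 1).
      complex_of_real ((c i)\<^sup>2) * (cnj (\<phi> i x) * E x y * \<phi> i y))"
    unfolding trace_prod_def rsd_mixture_def ketbra_def
    by (intro sum.cong refl) (simp add: sum_distrib_left mult_ac)
  also have "\<dots> = (\<Sum>x\<in>basis d n. \<Sum>i\<in>basis d (n - 1). \<Sum>y\<in>basis d n.
      complex_of_real ((c i)\<^sup>2) * (cnj (\<phi> i x) * E x y * \<phi> i y))"
    by (rule sum.cong[OF refl], rule sum.swap)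
  also have "\<dots> = (\<Sum>i\<in>basis d (n - 1). \<Sum>x\<in>basis d n. \<Sum>y\<in>basis d n.
      complex_of_real ((c i)\<^sup>2) * (cnj (\<phi> i x) * E x y * \<phi> i y))"
    by (rule sum.swap)
  also have "\<dots> = mixv d n c \<phi> E"
    unfolding mixv_def Bf_def by (simp only: sum_distrib_left)
  finally show ?thesis .
qed

lemma trace_pure: "trace_prod d n E (ketbra \<psi> \<psi>) = Bf d n E \<psi> \<psi>"
  unfolding trace_prod_def ketbra_def Bf_def
  by (intro sum.cong refl) (simp add: mult_ac)

lemma rsd_pos: "rsd d n \<psi> c \<phi> \<Longrightarrow> 1 \<le> n"
  by (erule rsd.cases) auto

theorem theorem4:
  fixes d n k :: nat and \<psi> :: "nat list \<Rightarrow> complex" and c :: "nat list \<Rightarrow> real"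
    and \<phi> :: "nat list \<Rightarrow> nat list \<Rightarrow> complex" and S :: "nat set"
    and Q :: "(nat \<Rightarrow> nat) \<Rightarrow> (nat \<Rightarrow> nat) \<Rightarrow> complex"
  assumes "inner_n d n \<psi> \<psi> = 1"
    and "rsd d n \<psi> c \<phi>"
    and "S \<subseteq> {..<n}"
    and "card S = k"
    and "local_projector d S Q"
  shows "trace_prod d n (embed_op n S Q) (rsd_mixture d n c \<phi>)
         \<ge> trace_prod d n (embed_op n S Q) (ketbra \<psi> \<psi>) / of_nat d ^ (k - 1)"
proof -
  have n1: "1 \<le> n" using assms(2) by (rule rsd_pos)
  have d0: "0 < d"
  proof (rule ccontr)
    assume "\<not> 0 < d"
    hence "d = 0" by simp
    moreover obtain m where "n = Suc m" using n1 by (cases n) auto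
    ultimately have "basis d n = {}" by (simp add: basis_Suc)
    hence "inner_n d n \<psi> \<psi> = 0" unfolding inner_n_def by simp
    thus False using assms(1) by simp
  qed
  define E where "E = embed_op n S Q"
  have psd: "\<forall>u. 0 \<le> Bf d n E u u" unfolding E_def using psd_embed assms(5,3) by blast
  have M: "Bf d n E \<psi> \<psi> \<le> of_nat d ^ (k - 1) * mixv d n c \<phi> E"
    using main[OF assms(2), rule_format, OF assms(3)] psd assms(4) unfolding E_def by blast
  define D where "D = (of_nat d ^ (k - 1) :: complex)"
  have Dr: "D = complex_of_real (real d ^ (k - 1))" unfolding D_def by simp
  have Dnz: "D \<noteq> 0" unfolding Dr using d0 by simp
  have Dinv: "0 \<le> inverse D" unfolding Dr by (simp add: less_eq_complex_def)
  have "Bf d n E \<psi> \<psi> / D = Bf d n E \<psi> \<psi> * inverse D" by (simp add: divide_inverse)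
  also have "\<dots> \<le> (D * mixv d n c \<phi> E) * inverse D"
    using M Dinv unfolding D_def by (intro mult_right_mono) auto
  also have "\<dots> = mixv d n c \<phi> E" using Dnz by simp
  finally have "Bf d n E \<psi> \<psi> / D \<le> mixv d n c \<phi> E" .
  thus ?thesis unfolding trace_mix trace_pure E_def[symmetric] D_def .
qed

end
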